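(* Let $\sigma:\mathbb{R}\to\mathbb{R}$ satisfy $|\sigma(x)|\le1$ for all $x$, be $L$-Lipschitz, and be $(R,\varepsilon)$-nondegenerate with $R\ge1$, $\varepsilon<1$. Let $\ell\ge 20(R+L)/\varepsilon$ and $\sigma^{(\ell)}(x)=\sigma(x)e^{-x^2/(2\ell^2)}$. Then $$\int_{-\infty}^{\infty}|\widehat{\sigma^{(\ell)}}(y)|^2\,|y|^2\,e^{-y^2/\ell^2}\,dy\ge\frac{\varepsilon^2}{8R}.$$
   Context: Fourier transform: $\widehat g(y)=\frac{1}{\sqrt{2\pi}}\int_{-\infty}^{\infty}e^{-\mathrm{i}yx}g(x)\,dx$. A function $\sigma$ is $(R,\varepsilon)$-nondegenerate if there are $x_1,x_2\in[-R,R]$ with $\sigma(x_1)-\sigma(x_2)\ge\varepsilon$. *)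

theory Defs
  imports "HOL-Analysis.Analysis"
begin

definition fourier :: "(real \<Rightarrow> real) \<Rightarrow> real \<Rightarrow> complex" where
  "fourier g y = complex_of_real (1 / sqrt (2 * pi)) *
      (LINT x|lborel. cis (- (y * x)) * complex_of_real (g x))"

definition nondegenerate :: "real \<Rightarrow> real \<Rightarrow> (real \<Rightarrow> real) \<Rightarrow> bool" where
  "nondegenerate R \<epsilon> \<sigma> \<longleftrightarrow>
     (\<exists>x1 x2. x1 \<in> {-R..R} \<and> x2 \<in> {-R..R} \<and> \<sigma> x1 - \<sigma> x2 \<ge> \<epsilon>)"

end

theory Submission imports Defs "HOL-Probability.Probability" begin

lemma gauss_char:
  "(LINT u|lborel. complex_of_real (std_normal_density u) * cis (\<theta> * u)) = complex_of_real (exp (-(\<theta>^2)/2))"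
proof -
  have "char std_normal_distribution \<theta> = complex_of_real (exp (-(\<theta>^2)/2))"
    by (simp add: char_std_normal_distribution)
  moreover have "char std_normal_distribution \<theta> = (LINT u|lborel. std_normal_density u *\<^sub>R iexp (\<theta> * u))"
    unfolding char_def by (subst integral_density) (auto simp: normal_density_nonneg)
  ultimately show ?thesis
    by (simp add: cis_conv_exp scaleR_conv_of_real mult.commute)
qed

lemma gauss_ft:
  fixes l t :: real assumes l: "l > 0"
  shows "(LINT y|lborel. complex_of_real (exp (-(y^2)/l^2)) * cis (y * t))
       = complex_of_real (2*pi*normal_density 0 (sqrt 2 / l) t)"
proof -
  define c where "c = l / sqrt 2"
  have c: "c > 0" using l by (simp add: c_def)
  have c2: "c^2 = l^2/2" by (simp add: c_def power_divide)
  have "(LINT y|lborel. complex_of_real (exp (-(y^2)/l^2)) * cis (y * t))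
     = \<bar>c\<bar> *\<^sub>R (LINT u|lborel. complex_of_real (exp (-((0 + c*u)^2)/l^2)) * cis ((0 + c*u) * t))"
    using c by (intro lborel_integral_real_affine) simp
  also have "(\<lambda>u. complex_of_real (exp (-((0 + c*u)^2)/l^2)) * cis ((0 + c*u) * t))
     = (\<lambda>u. complex_of_real (sqrt (2*pi)) * (complex_of_real (std_normal_density u) * cis ((c*t) * u)))"
  proof
    fix u
    have "exp (-((0 + c*u)^2)/l^2) = sqrt (2*pi) * std_normal_density u"
      using l by (simp add: std_normal_density_def power_mult_distrib c2)
    then show "complex_of_real (exp (-((0 + c*u)^2)/l^2)) * cis ((0 + c*u) * t)
     = complex_of_real (sqrt (2*pi)) * (complex_of_real (std_normal_density u) * cis ((c*t) * u))"
      by (simp add: ac_simps)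
  qed
  also have "\<bar>c\<bar> *\<^sub>R (LINT u|lborel. complex_of_real (sqrt (2*pi)) * (complex_of_real (std_normal_density u) * cis ((c*t) * u)))
     = complex_of_real (c * sqrt (2*pi) * exp (-((c*t)^2)/2))"
    using c by (simp add: gauss_char scaleR_conv_of_real)
  also have "c * sqrt (2*pi) * exp (-((c*t)^2)/2) = 2*pi*normal_density 0 (sqrt 2 / l) t"
  proof -
    have e: "-((c*t)^2)/2 = -((t - 0)^2) / (2 * (sqrt 2 / l)^2)"
      using l by (simp add: power_mult_distrib c2 power_divide field_simps)
    have "sqrt (2 * pi * (sqrt 2 / l)\<^sup>2) = 2 * sqrt pi / l"
      using l by (simp add: power_divide real_sqrt_mult real_sqrt_divide)
    moreover have "c * sqrt (2*pi) = 2*pi / (2 * sqrt pi / l)"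
      using l by (simp add: c_def real_sqrt_mult field_simps)
    ultimately show ?thesis unfolding normal_density_def e by simp
  qed
  finally show ?thesis .
qed


lemma gauss_integrable:
  fixes s m :: real assumes s: "s > 0"
  shows "integrable lborel (\<lambda>y. exp (- ((y - m)\<^sup>2) / (2 * s\<^sup>2)))"
proof -
  have "integrable lborel (\<lambda>y. sqrt (2 * pi * s\<^sup>2) * normal_density m s y)"
    using s by (intro integrable_mult_right integrable_normal_density)
  moreover have "\<And>y. sqrt (2 * pi * s\<^sup>2) * normal_density m s y = exp (- ((y - m)\<^sup>2) / (2 * s\<^sup>2))"
    using s by (simp add: normal_density_def)
  ultimately show ?thesis by simp
qed

lemma conv_err:
  fixes \<sigma> :: "real \<Rightarrow> real" and L l s x0 :: real
  assumes bounded: "\<And>x. \<bar>\<sigma> x\<bar> \<le> 1"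
    and lip: "L-lipschitz_on UNIV \<sigma>"
    and l: "l > 0" and s: "s > 0"
  shows "\<bar>(LINT x|lborel. \<sigma> x * exp (- x\<^sup>2 / (2 * l\<^sup>2)) * normal_density x0 s x) - \<sigma> x0\<bar>
          \<le> L * s + (x0\<^sup>2 + s\<^sup>2) / l\<^sup>2"
proof -
  define N where "N = normal_density x0 s"
  define g where "g x = \<sigma> x * exp (- x\<^sup>2 / (2 * l\<^sup>2))" for x
  have L0: "L \<ge> 0" using lip by (simp add: lipschitz_on_def)
  have Lip: "\<bar>\<sigma> x - \<sigma> y\<bar> \<le> L * \<bar>x - y\<bar>" for x y
    using lip by (auto simp: lipschitz_on_def dist_real_def)
  have contS: "continuous_on UNIV \<sigma>"
    using lip by (rule lipschitz_on_continuous_on)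
  have measS[measurable]: "\<sigma> \<in> borel_measurable borel"
    using contS by (rule borel_measurable_continuous_onI)
  have N0: "N x \<ge> 0" for x by (simp add: N_def)
  have intN: "integrable lborel N" using s by (simp add: N_def integrable_normal_density)
  have intN1: "(LINT x|lborel. N x) = 1" using s by (simp add: N_def integral_normal_density)
  have intN2: "integrable lborel (\<lambda>x. N x * (x - x0)^2)"
    unfolding N_def using s by (rule integrable_normal_moment)
  have intN2v: "(LINT x|lborel. N x * (x - x0)^2) = s\<^sup>2"
    using integral_normal_moment_even[OF s, where k=1 and \<mu>=x0] unfolding N_def by (simp add: power2_eq_square)
  have intgN: "integrable lborel (\<lambda>x. g x * N x)"
  proof (rule Bochner_Integration.integrable_bound[OF intN])
    show "(\<lambda>x. g x * N x) \<in> borel_measurable lborel" unfolding g_def N_def by measurable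
    show "AE x in lborel. norm (g x * N x) \<le> norm (N x)"
    proof (intro AE_I2)
      fix x
      have "\<bar>g x\<bar> \<le> 1" using bounded[of x] by (simp add: g_def abs_mult mult_le_one)
      then show "norm (g x * N x) \<le> norm (N x)" using N0[of x] by (simp add: abs_mult mult_left_le_one_le)
    qed
  qed
  define h where "h x = (L * s / 2 + x0\<^sup>2 / l\<^sup>2) * N x + (L / (2 * s) + 1 / l\<^sup>2) * (N x * (x - x0)^2)" for x
  have inth: "integrable lborel h" unfolding h_def using intN intN2 by simp
  have inthv: "(LINT x|lborel. h x) = L * s + (x0\<^sup>2 + s\<^sup>2) / l\<^sup>2"
  proof -
    have "(LINT x|lborel. h x) = (L * s / 2 + x0\<^sup>2 / l\<^sup>2) * (LINT x|lborel. N x) + (L / (2 * s) + 1 / l\<^sup>2) * (LINT x|lborel. N x * (x - x0)^2)"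
      unfolding h_def using intN intN2 by (simp del: integral_mult_right_zero add: integral_add integral_mult_right_zero)
    also have "\<dots> = L * s + (x0\<^sup>2 + s\<^sup>2) / l\<^sup>2" unfolding intN1 intN2v using s l by (simp add: field_simps power2_eq_square)
    finally show ?thesis .
  qed
  have pt: "\<bar>g x - \<sigma> x0\<bar> * N x \<le> h x" for x
  proof -
    define e where "e = exp (- x\<^sup>2 / (2 * l\<^sup>2))"
    have e1: "1 - e \<le> x\<^sup>2 / (2 * l\<^sup>2)" unfolding e_def using exp_ge_add_one_self[of "- x\<^sup>2 / (2 * l\<^sup>2)"] by simp
    have e0: "e \<le> 1" unfolding e_def using l by simp
    have "\<bar>g x - \<sigma> x0\<bar> = \<bar>(\<sigma> x - \<sigma> x0) - \<sigma> x * (1 - e)\<bar>" by (simp add: g_def e_def algebra_simps)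
    also have "\<dots> \<le> \<bar>\<sigma> x - \<sigma> x0\<bar> + \<bar>\<sigma> x\<bar> * (1 - e)" using e0 abs_triangle_ineq4[of "\<sigma> x - \<sigma> x0" "\<sigma> x * (1 - e)"] by (simp add: abs_mult)
    also have "\<dots> \<le> L * \<bar>x - x0\<bar> + 1 * (x\<^sup>2 / (2 * l\<^sup>2))"
      using Lip[of x x0] bounded[of x] e1 e0 by (intro add_mono mult_mono) auto
    also have "\<dots> \<le> L * ((s + (x - x0)^2 / s) / 2) + (x0\<^sup>2 + (x - x0)^2) / l\<^sup>2"
    proof (intro add_mono mult_left_mono L0)
      have "0 \<le> (\<bar>x - x0\<bar> - s)^2" by simp
      then have "2 * s * \<bar>x - x0\<bar> \<le> s^2 + (x - x0)^2" by (simp add: power2_eq_square algebra_simps)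
      then show "\<bar>x - x0\<bar> \<le> (s + (x - x0)^2 / s) / 2" using s by (simp add: field_simps power2_eq_square)
      have "x\<^sup>2 \<le> 2 * (x0\<^sup>2 + (x - x0)^2)"
        using sum_squares_ge_zero[of "x - 2*x0" 0] by (simp add: power2_eq_square algebra_simps)
      then show "1 * (x\<^sup>2 / (2 * l\<^sup>2)) \<le> (x0\<^sup>2 + (x - x0)^2) / l\<^sup>2"
        using l by (simp add: field_simps)
    qed
    finally have "\<bar>g x - \<sigma> x0\<bar> \<le> L * ((s + (x - x0)^2 / s) / 2) + (x0\<^sup>2 + (x - x0)^2) / l\<^sup>2" .
    then have "\<bar>g x - \<sigma> x0\<bar> * N x \<le> (L * ((s + (x - x0)^2 / s) / 2) + (x0\<^sup>2 + (x - x0)^2) / l\<^sup>2) * N x"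
      using N0[of x] by (rule mult_right_mono)
    also have "\<dots> = h x" unfolding h_def using s l by (simp add: field_simps)
    finally show ?thesis .
  qed
  have "(LINT x|lborel. g x * N x) - \<sigma> x0 = (LINT x|lborel. g x * N x - \<sigma> x0 * N x)"
    using intgN intN intN1 by simp
  also have "\<dots> = (LINT x|lborel. (g x - \<sigma> x0) * N x)" by (simp add: algebra_simps)
  finally have eq: "(LINT x|lborel. g x * N x) - \<sigma> x0 = (LINT x|lborel. (g x - \<sigma> x0) * N x)" .
  have int3: "integrable lborel (\<lambda>x. (g x - \<sigma> x0) * N x)"
    using intgN intN by (simp add: algebra_simps)
  have "\<bar>LINT x|lborel. (g x - \<sigma> x0) * N x\<bar> \<le> (LINT x|lborel. \<bar>(g x - \<sigma> x0) * N x\<bar>)"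
    by (rule integral_abs_bound)
  also have "\<dots> \<le> (LINT x|lborel. h x)"
    using integrable_abs[OF int3] inth pt N0 by (intro integral_mono) (auto simp: abs_mult)
  finally show ?thesis using eq inthv unfolding g_def N_def by simp
qed


lemma cis_measurable[measurable]: "cis \<in> borel_measurable borel"
  by (intro borel_measurable_continuous_onI continuous_intros)

lemma gauss_integrable2:
  fixes l :: real assumes l: "l > 0"
  shows "integrable lborel (\<lambda>y. exp (- (y\<^sup>2) / l\<^sup>2))"
proof -
  have "integrable lborel (\<lambda>y. exp (- ((y - 0)\<^sup>2) / (2 * (l / sqrt 2)\<^sup>2)))"
    using l by (intro gauss_integrable) simp
  moreover have "(2 * (l / sqrt 2)\<^sup>2) = l\<^sup>2" by (simp add: power_divide)
  ultimately show ?thesis by simp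
qed

lemma gauss_cis_integrable:
  fixes l t :: real assumes l: "l > 0"
  shows "integrable lborel (\<lambda>y. complex_of_real (exp (- (y\<^sup>2) / l\<^sup>2)) * cis (y * t))"
proof (rule Bochner_Integration.integrable_bound[OF gauss_integrable2[OF l]])
  show "(\<lambda>y. complex_of_real (exp (- (y\<^sup>2) / l\<^sup>2)) * cis (y * t)) \<in> borel_measurable lborel"
    by measurable
  show "AE y in lborel. norm (complex_of_real (exp (- (y\<^sup>2) / l\<^sup>2)) * cis (y * t)) \<le> norm (exp (- (y\<^sup>2) / l\<^sup>2))"
    by (simp add: norm_mult)
qed


lemma fubini_id:
  fixes g :: "real \<Rightarrow> real" and l x1 x2 :: real
  assumes l: "l > 0" and gm[measurable]: "g \<in> borel_measurable borel"
    and gb: "\<And>x. \<bar>g x\<bar> \<le> 1" and gi: "integrable lborel g"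
  defines "Q \<equiv> \<lambda>y. complex_of_real (exp (- (y\<^sup>2) / l\<^sup>2)) * (cis (y * x1) - cis (y * x2))"
  shows "integrable lborel (\<lambda>y. fourier g y * Q y)"
    and "(LINT y|lborel. fourier g y * Q y) = complex_of_real (sqrt (2 * pi) *
          ((LINT x|lborel. g x * normal_density x1 (sqrt 2 / l) x) - (LINT x|lborel. g x * normal_density x2 (sqrt 2 / l) x)))"
proof -
  define k where "k = complex_of_real (1 / sqrt (2 * pi))"
  define f where "f x y = k * (cis (- (y * x)) * complex_of_real (g x)) * Q y" for x y
  have Qm[measurable]: "Q \<in> borel_measurable borel" unfolding Q_def by measurable
  have Qi: "integrable lborel Q"
  proof -
    have "integrable lborel (\<lambda>y. complex_of_real (exp (- (y\<^sup>2) / l\<^sup>2)) * cis (y * x1) - complex_of_real (exp (- (y\<^sup>2) / l\<^sup>2)) * cis (y * x2))"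
      using gauss_cis_integrable[OF l] by (intro Bochner_Integration.integrable_diff)
    then show ?thesis unfolding Q_def by (simp add: algebra_simps)
  qed
  have fm: "case_prod f \<in> borel_measurable (lborel \<Otimes>\<^sub>M lborel)"
    unfolding f_def by measurable
  have fint: "integrable (lborel \<Otimes>\<^sub>M lborel) (case_prod f)"
  proof (rule lborel_pair.Fubini_integrable[OF fm])
    have "integrable lborel (\<lambda>x. (norm k * (LINT y|lborel. norm (Q y))) * \<bar>g x\<bar>)"
      using gi by (intro integrable_mult_right integrable_abs)
    moreover have "(LINT y|lborel. norm (case_prod f (x, y))) = (norm k * (LINT y|lborel. norm (Q y))) * \<bar>g x\<bar>" for x
      unfolding f_def by (simp add: norm_mult ac_simps)
    ultimately show "integrable lborel (\<lambda>x. LINT y|lborel. norm (case_prod f (x, y)))" by simp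
    show "AE x in lborel. integrable lborel (\<lambda>y. case_prod f (x, y))"
    proof (intro AE_I2)
      fix x
      show "integrable lborel (\<lambda>y. case_prod f (x, y))"
      proof (rule Bochner_Integration.integrable_bound[of _ "\<lambda>y. (norm k * \<bar>g x\<bar>) * norm (Q y)"])
        show "integrable lborel (\<lambda>y. (norm k * \<bar>g x\<bar>) * norm (Q y))"
          using Qi by (intro integrable_mult_right integrable_norm)
        show "(\<lambda>y. case_prod f (x, y)) \<in> borel_measurable lborel" unfolding case_prod_conv f_def by measurable
        show "AE y in lborel. norm (case_prod f (x, y)) \<le> norm ((norm k * \<bar>g x\<bar>) * norm (Q y))"
          unfolding f_def by (intro AE_I2) (simp add: norm_mult)
      qed
    qed
  qed
  have inner_x: "(LINT x|lborel. f x y) = fourier g y * Q y" for y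
    unfolding f_def fourier_def k_def by simp
  show "integrable lborel (\<lambda>y. fourier g y * Q y)"
    using lborel_pair.integrable_snd[OF fint] unfolding inner_x .
  have swap: "(LINT y|lborel. LINT x|lborel. f x y) = (LINT x|lborel. LINT y|lborel. f x y)"
    using lborel_pair.Fubini_integral[OF fint] .
  define s where "s = sqrt 2 / l"
  have s: "s > 0" using l by (simp add: s_def)
  have inner_y: "(LINT y|lborel. f x y) = complex_of_real (sqrt (2 * pi) * (g x * normal_density x1 s x - g x * normal_density x2 s x))" for x
  proof -
    have e1: "cis (- (y * x)) * (complex_of_real (exp (- (y\<^sup>2) / l\<^sup>2)) * (cis (y * x1) - cis (y * x2)))
        = complex_of_real (exp (- (y\<^sup>2) / l\<^sup>2)) * cis (y * (x1 - x)) - complex_of_real (exp (- (y\<^sup>2) / l\<^sup>2)) * cis (y * (x2 - x))" for y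
    proof -
      have "cis (- (y * x)) * cis (y * x1) = cis (y * (x1 - x))" "cis (- (y * x)) * cis (y * x2) = cis (y * (x2 - x))"
        by (simp_all add: cis_mult algebra_simps)
      then show ?thesis by (simp add: right_diff_distrib mult.left_commute[of "cis (- (y * x))"])
    qed
    have "(LINT y|lborel. f x y) = k * complex_of_real (g x) * (LINT y|lborel. cis (- (y * x)) * Q y)"
    proof -
      have "\<And>y. f x y = (k * complex_of_real (g x)) * (cis (- (y * x)) * Q y)" unfolding f_def by (simp add: ac_simps)
      then show ?thesis by (simp only: integral_mult_right_zero)
    qed
    also have "(LINT y|lborel. cis (- (y * x)) * Q y) =
        (LINT y|lborel. complex_of_real (exp (- (y\<^sup>2) / l\<^sup>2)) * cis (y * (x1 - x))) - (LINT y|lborel. complex_of_real (exp (- (y\<^sup>2) / l\<^sup>2)) * cis (y * (x2 - x)))"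
      unfolding Q_def e1 using gauss_cis_integrable[OF l] by (intro Bochner_Integration.integral_diff)
    also have "\<dots> = complex_of_real (2 * pi * normal_density x1 s x - 2 * pi * normal_density x2 s x)"
      using gauss_ft[OF l] by (simp add: s_def normal_density_def power2_commute)
    also have "k * complex_of_real (g x) * complex_of_real (2 * pi * normal_density x1 s x - 2 * pi * normal_density x2 s x)
      = complex_of_real ((2 * pi / sqrt (2 * pi)) * (g x * normal_density x1 s x - g x * normal_density x2 s x))"
      unfolding k_def by (simp add: algebra_simps)
    also have "2 * pi / sqrt (2 * pi) = sqrt (2 * pi)" by (rule real_div_sqrt) simp
    finally show ?thesis .
  qed
  have gN: "integrable lborel (\<lambda>x. g x * normal_density m s x)" for m
  proof (rule Bochner_Integration.integrable_bound[of _ "normal_density m s"])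
    show "integrable lborel (normal_density m s)" using s by (simp add: integrable_normal_density)
    show "(\<lambda>x. g x * normal_density m s x) \<in> borel_measurable lborel" by measurable
    show "AE x in lborel. norm (g x * normal_density m s x) \<le> norm (normal_density m s x)"
      using gb by (intro AE_I2) (simp add: abs_mult mult_left_le_one_le)
  qed
  have "(LINT y|lborel. fourier g y * Q y) = (LINT x|lborel. LINT y|lborel. f x y)"
    using swap unfolding inner_x .
  also have "\<dots> = complex_of_real (sqrt (2 * pi) * (LINT x|lborel. (g x * normal_density x1 s x - g x * normal_density x2 s x)))"
    unfolding inner_y integral_complex_of_real integral_mult_right_zero ..
  also have "(LINT x|lborel. (g x * normal_density x1 s x - g x * normal_density x2 s x))
      = (LINT x|lborel. g x * normal_density x1 s x) - (LINT x|lborel. g x * normal_density x2 s x)"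
    using gN by (intro Bochner_Integration.integral_diff)
  finally show "(LINT y|lborel. fourier g y * Q y) = complex_of_real (sqrt (2 * pi) *
          ((LINT x|lborel. g x * normal_density x1 (sqrt 2 / l) x) - (LINT x|lborel. g x * normal_density x2 (sqrt 2 / l) x)))"
    unfolding s_def .
qed


lemma cis_diff_sq: "(cmod (cis u - cis v))\<^sup>2 = 2 - 2 * cos (u - v)"
proof -
  have "(cmod (cis u - cis v))\<^sup>2 = (cos u - cos v)\<^sup>2 + (sin u - sin v)\<^sup>2" unfolding cmod_power2 by simp
  also have "\<dots> = (sin u)\<^sup>2 + (cos u)\<^sup>2 + ((sin v)\<^sup>2 + (cos v)\<^sup>2) - 2 * (cos u * cos v + sin u * sin v)"
    by (simp add: power2_eq_square algebra_simps)
  also have "\<dots> = 2 - 2 * cos (u - v)" by (simp add: cos_diff)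
  finally show ?thesis .
qed

lemma one_minus_cos_le: "2 - 2 * cos (w::real) \<le> w\<^sup>2"
proof -
  have "cos w = 1 - 2 * sin (w/2) ^ 2" using cos_double_sin[of "w/2"] by simp
  moreover have "(sin (w/2))\<^sup>2 \<le> (w/2)\<^sup>2"
    using abs_sin_x_le_abs_x[of "w/2"] by (metis abs_ge_zero power2_abs power_mono)
  ultimately show ?thesis by (simp add: power_divide)
qed

lemma arctan_integral:
  fixes R :: real assumes R: "R > 0"
  shows "(\<integral>\<^sup>+y. ennreal (8 * R\<^sup>2 / (1 + R\<^sup>2 * y\<^sup>2)) \<partial>lborel) \<le> ennreal (8 * pi * R)"
proof -
  define B where "B y = 8 * R\<^sup>2 / (1 + R\<^sup>2 * y\<^sup>2)" for y :: real
  have Bm[measurable]: "B \<in> borel_measurable borel" unfolding B_def by measurable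
  have B0: "B y \<ge> 0" for y unfolding B_def by (simp add: add_pos_nonneg)
  define h where "h y = ennreal (B y) * indicator {0..} y" for y :: real
  have hm[measurable]: "h \<in> borel_measurable borel" unfolding h_def by measurable
  have FTC: "(\<integral>\<^sup>+y. h y \<partial>lborel) = ennreal (4 * pi * R - 8 * R * arctan (R * 0))"
    unfolding h_def
  proof (rule nn_integral_FTC_atLeast)
    show "B \<in> borel_measurable borel" by measurable
    show "0 \<le> B x" for x by (rule B0)
    show "((\<lambda>y. 8 * R * arctan (R * y)) has_real_derivative B x) (at x)" for x
      unfolding B_def
      by (rule derivative_eq_intros refl | simp)+ (simp add: power2_eq_square field_simps)
    have "((\<lambda>y. arctan (R * y)) \<longlongrightarrow> pi / 2) at_top"
      by (rule filterlim_compose[OF tendsto_arctan_at_top]) (intro filterlim_tendsto_pos_mult_at_top[OF tendsto_const R filterlim_ident])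
    then have "((\<lambda>y. 8 * R * arctan (R * y)) \<longlongrightarrow> 8 * R * (pi / 2)) at_top"
      by (intro tendsto_mult tendsto_const)
    then show "((\<lambda>y. 8 * R * arctan (R * y)) \<longlongrightarrow> 4 * pi * R) at_top" by (simp add: field_simps)
  qed
  have sym: "(\<integral>\<^sup>+y. h (- y) \<partial>lborel) = (\<integral>\<^sup>+y. h y \<partial>lborel)"
    using nn_integral_real_affine[OF hm, of "-1" 0] by simp
  have "(\<integral>\<^sup>+y. ennreal (B y) \<partial>lborel) \<le> (\<integral>\<^sup>+y. h y + h (- y) \<partial>lborel)"
  proof (rule nn_integral_mono)
    fix y :: real
    have "B (- y) = B y" unfolding B_def by simp
    then show "ennreal (B y) \<le> h y + h (- y)"
      unfolding h_def by (cases "y \<ge> 0") (auto simp: indicator_def)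
  qed
  also have "\<dots> = (\<integral>\<^sup>+y. h y \<partial>lborel) + (\<integral>\<^sup>+y. h (- y) \<partial>lborel)"
    by (rule nn_integral_add) measurable
  also have "\<dots> = ennreal (8 * pi * R)"
    unfolding sym FTC using R by (simp flip: ennreal_plus)
  finally show ?thesis unfolding B_def by simp
qed


lemma Q_bound:
  fixes R l x1 x2 y :: real
  assumes R: "R > 0" and a: "\<bar>x1 - x2\<bar> \<le> 2 * R" and l: "l > 0"
  shows "(cmod (complex_of_real (exp (- y\<^sup>2 / l\<^sup>2)) * (cis (y * x1) - cis (y * x2))))\<^sup>2
           / (\<bar>y\<bar>\<^sup>2 * exp (- y\<^sup>2 / l\<^sup>2)) \<le> 8 * R\<^sup>2 / (1 + R\<^sup>2 * y\<^sup>2)"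
proof (cases "y = 0")
  case True then show ?thesis by simp
next
  case False
  define E where "E = exp (- y\<^sup>2 / l\<^sup>2)"
  define D where "D = 2 - 2 * cos (y * x1 - y * x2)"
  have E0: "E > 0" and E1: "E \<le> 1" unfolding E_def using l by auto
  have y2: "y\<^sup>2 > 0" using False by simp
  have D0: "D \<ge> 0" unfolding D_def using cos_le_one[of "y * x1 - y * x2"] by simp
  have D4: "D \<le> 4" unfolding D_def using cos_ge_minus_one[of "y * x1 - y * x2"] by linarith
  have Dw: "D \<le> y\<^sup>2 * (x1 - x2)\<^sup>2" unfolding D_def using one_minus_cos_le[of "y * x1 - y * x2"]
    by (simp add: power_mult_distrib right_diff_distrib[symmetric])
  have "(cmod (complex_of_real E * (cis (y * x1) - cis (y * x2))))\<^sup>2 = E\<^sup>2 * D"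
    unfolding D_def using E0 by (simp add: norm_mult power_mult_distrib cis_diff_sq)
  then have lhs: "(cmod (complex_of_real E * (cis (y * x1) - cis (y * x2))))\<^sup>2 / (\<bar>y\<bar>\<^sup>2 * E) = E * (D / y\<^sup>2)"
    using E0 by (simp add: power2_eq_square field_simps)
  have "E * (D / y\<^sup>2) \<le> D / y\<^sup>2" using E0 E1 D0 y2 by (intro mult_left_le_one_le) auto
  also have "D / y\<^sup>2 \<le> 8 * R\<^sup>2 / (1 + R\<^sup>2 * y\<^sup>2)"
  proof (cases "R\<^sup>2 * y\<^sup>2 \<le> 1")
    case True
    have "D / y\<^sup>2 \<le> (x1 - x2)\<^sup>2" using Dw y2 by (simp add: divide_le_eq mult.commute)
    also have "\<dots> \<le> (2 * R)\<^sup>2" using a by (metis abs_ge_zero power2_abs power_mono)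
    also have "\<dots> \<le> 8 * R\<^sup>2 / (1 + R\<^sup>2 * y\<^sup>2)"
    proof -
      have p: "1 + R\<^sup>2 * y\<^sup>2 > 0" by (simp add: add_pos_nonneg)
      have "(2 * R)\<^sup>2 * (1 + R\<^sup>2 * y\<^sup>2) \<le> (2 * R)\<^sup>2 * 2"
        using True by (intro mult_left_mono) auto
      then show ?thesis using p by (simp add: le_divide_eq power_mult_distrib)
    qed
    finally show ?thesis .
  next
    case False
    have "D / y\<^sup>2 \<le> 4 / y\<^sup>2" using D4 y2 by (simp add: divide_right_mono)
    also have "\<dots> \<le> 8 * R\<^sup>2 / (1 + R\<^sup>2 * y\<^sup>2)"
    proof -
      have p: "1 + R\<^sup>2 * y\<^sup>2 > 0" by (simp add: add_pos_nonneg)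
      have "4 * (1 + R\<^sup>2 * y\<^sup>2) \<le> 8 * R\<^sup>2 * y\<^sup>2" using False by (simp add: algebra_simps)
      then have "4 \<le> 8 * R\<^sup>2 * y\<^sup>2 / (1 + R\<^sup>2 * y\<^sup>2)" using p by (simp add: le_divide_eq)
      then have "4 \<le> 8 * R\<^sup>2 / (1 + R\<^sup>2 * y\<^sup>2) * y\<^sup>2" by simp
      then show ?thesis using y2 by (simp add: divide_le_eq)
    qed
    finally show ?thesis .
  qed
  finally show ?thesis using lhs unfolding E_def by simp
qed


theorem lemma4p9:
  fixes \<sigma> :: "real \<Rightarrow> real" and L R \<epsilon> l :: real
  assumes bounded: "\<And>x. \<bar>\<sigma> x\<bar> \<le> 1"
    and lip: "L-lipschitz_on UNIV \<sigma>"
    and nondeg: "nondegenerate R \<epsilon> \<sigma>"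
    and R: "R \<ge> 1"
    and eps: "0 < \<epsilon>" "\<epsilon> < 1"
    and ell: "l \<ge> 20 * (R + L) / \<epsilon>"
  shows "(\<integral>\<^sup>+ y. ennreal ((cmod (fourier (\<lambda>x. \<sigma> x * exp (- x\<^sup>2 / (2 * l\<^sup>2))) y))\<^sup>2
              * \<bar>y\<bar>\<^sup>2 * exp (- y\<^sup>2 / l\<^sup>2)) \<partial>lborel)
         \<ge> ennreal (\<epsilon>\<^sup>2 / (8 * R))"
proof -
  obtain x1 x2 where x1: "x1 \<in> {-R..R}" and x2: "x2 \<in> {-R..R}" and d: "\<sigma> x1 - \<sigma> x2 \<ge> \<epsilon>"
    using nondeg unfolding nondegenerate_def by blast
  have L0: "L \<ge> 0" using lip by (simp add: lipschitz_on_def)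
  have RL: "R + L \<ge> 1" using R L0 by simp
  have "20 \<le> 20 * (R + L) / \<epsilon>" using eps RL by (simp add: le_divide_eq)
  then have l20: "l \<ge> 20" using ell by simp
  then have l: "l > 0" by simp
  have "20 * (R + L) \<le> l * \<epsilon>" using ell eps by (simp add: divide_le_eq)
  then have key: "(R + L) / l \<le> \<epsilon> / 20" using l by (simp add: divide_le_eq field_simps)
  have measS[measurable]: "\<sigma> \<in> borel_measurable borel"
    using lipschitz_on_continuous_on[OF lip] by (rule borel_measurable_continuous_onI)
  define g where "g = (\<lambda>x. \<sigma> x * exp (- x\<^sup>2 / (2 * l\<^sup>2)))"
  define s where "s = sqrt 2 / l"
  have s: "s > 0" using l by (simp add: s_def)
  define Q where "Q = (\<lambda>y. complex_of_real (exp (- (y\<^sup>2) / l\<^sup>2)) * (cis (y * x1) - cis (y * x2)))"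
  define F where "F = fourier g"
  have gm[measurable]: "g \<in> borel_measurable borel" unfolding g_def by measurable
  have gb: "\<bar>g x\<bar> \<le> 1" for x using bounded[of x] by (simp add: g_def abs_mult mult_le_one)
  have gi: "integrable lborel g"
  proof (rule Bochner_Integration.integrable_bound[OF gauss_integrable[OF l, of 0]])
    show "g \<in> borel_measurable lborel" by measurable
    show "AE x in lborel. norm (g x) \<le> norm (exp (- ((x - 0)\<^sup>2) / (2 * l\<^sup>2)))"
      using bounded by (intro AE_I2) (simp add: g_def abs_mult mult_left_le_one_le)
  qed
  define \<Delta> where "\<Delta> = (LINT x|lborel. g x * normal_density x1 s x) - (LINT x|lborel. g x * normal_density x2 s x)"
  have FQ1: "integrable lborel (\<lambda>y. F y * Q y)"
    using fubini_id(1)[OF l gm gb gi, of x1 x2] unfolding Q_def F_def .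
  have FQ2: "(LINT y|lborel. F y * Q y) = complex_of_real (sqrt (2 * pi) * \<Delta>)"
    using fubini_id(2)[OF l gm gb gi, of x1 x2] unfolding Q_def F_def \<Delta>_def s_def .
  have e1: "\<bar>(LINT x|lborel. g x * normal_density x1 s x) - \<sigma> x1\<bar> \<le> L * s + (x1\<^sup>2 + s\<^sup>2) / l\<^sup>2"
    using conv_err[OF bounded lip l s, of x1] unfolding g_def by simp
  have e2: "\<bar>(LINT x|lborel. g x * normal_density x2 s x) - \<sigma> x2\<bar> \<le> L * s + (x2\<^sup>2 + s\<^sup>2) / l\<^sup>2"
    using conv_err[OF bounded lip l s, of x2] unfolding g_def by simp
  have err: "L * s + (x\<^sup>2 + s\<^sup>2) / l\<^sup>2 \<le> \<epsilon> / 8" if x: "x \<in> {-R..R}" for x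
  proof -
    have sq2: "sqrt 2 \<le> 3 / 2" by (rule real_le_lsqrt) (auto simp: power2_eq_square)
    have cL: "L / l \<le> \<epsilon> / 20" using key L0 R l by (smt (verit) divide_right_mono)
    have cR: "R / l \<le> \<epsilon> / 20" using key L0 R l by (smt (verit) divide_right_mono)
    have c1: "1 / l \<le> \<epsilon> / 20" using key RL l by (smt (verit) divide_right_mono)
    have b0: "0 \<le> 1 / l" using l by simp
    have "L * s = sqrt 2 * (L / l)" by (simp add: s_def)
    also have "\<dots> \<le> 3 / 2 * (\<epsilon> / 20)" using sq2 cL L0 l by (intro mult_mono) auto
    finally have t1: "L * s \<le> 3 / 40 * \<epsilon>" by simp
    have xx: "x\<^sup>2 \<le> R\<^sup>2" using x by (intro power2_le_iff_abs_le[THEN iffD2]) auto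
    have "(x\<^sup>2 + s\<^sup>2) / l\<^sup>2 \<le> (R\<^sup>2 + s\<^sup>2) / l\<^sup>2" using xx l by (intro divide_right_mono) auto
    also have "\<dots> = (R / l)\<^sup>2 + 2 * (1 / l) ^ 4" using l by (simp add: s_def power_divide field_simps)
    also have "\<dots> \<le> (\<epsilon> / 20)\<^sup>2 + 2 * (\<epsilon> / 20) ^ 4"
      using cR c1 b0 R l by (intro add_mono mult_left_mono power_mono) auto
    also have "\<dots> \<le> \<epsilon> / 400 + 2 * (\<epsilon> / 400)"
    proof (intro add_mono mult_left_mono)
      have "\<epsilon>\<^sup>2 \<le> \<epsilon>" using eps by (simp add: power2_eq_square mult_left_le_one_le)
      then show "(\<epsilon> / 20)\<^sup>2 \<le> \<epsilon> / 400" by (simp add: power_divide)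
      have "(\<epsilon> / 20) ^ 4 \<le> (\<epsilon> / 20) ^ 2" using eps by (intro power_decreasing) auto
      then show "(\<epsilon> / 20) ^ 4 \<le> \<epsilon> / 400" using \<open>(\<epsilon> / 20)\<^sup>2 \<le> \<epsilon> / 400\<close> by simp
    qed auto
    finally show ?thesis using t1 eps by linarith
  qed
  have Delta: "\<Delta> \<ge> 3 / 4 * \<epsilon>"
    using e1 e2 err[OF x1] err[OF x2] d unfolding \<Delta>_def by linarith
  define A0 where "A0 = sqrt (2 * pi) * (3 / 4 * \<epsilon>)"
  have A0: "A0 > 0" unfolding A0_def using eps by simp
  have Rpos: "R > 0" using R by simp
  define t where "t = 8 * pi * R / A0"
  have t: "t > 0" unfolding t_def using A0 Rpos by simp
  define X where "X y = (cmod (F y))\<^sup>2 * \<bar>y\<bar>\<^sup>2 * exp (- y\<^sup>2 / l\<^sup>2)" for y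
  define Y where "Y y = (cmod (Q y))\<^sup>2 / (\<bar>y\<bar>\<^sup>2 * exp (- y\<^sup>2 / l\<^sup>2))" for y
  have Fm[measurable]: "F \<in> borel_measurable borel" unfolding F_def fourier_def by measurable
  have Qm[measurable]: "Q \<in> borel_measurable borel" unfolding Q_def by measurable
  have Xm[measurable]: "X \<in> borel_measurable borel" unfolding X_def by measurable
  have Ym[measurable]: "Y \<in> borel_measurable borel" unfolding Y_def by measurable
  have X0: "X y \<ge> 0" for y unfolding X_def by simp
  have Y0: "Y y \<ge> 0" for y unfolding Y_def by simp
  have "ennreal A0 \<le> ennreal (norm (LINT y|lborel. F y * Q y))"
  proof -
    have "norm (LINT y|lborel. F y * Q y) = sqrt (2 * pi) * \<bar>\<Delta>\<bar>"
      unfolding FQ2 by (simp add: norm_mult)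
    moreover have "A0 \<le> sqrt (2 * pi) * \<bar>\<Delta>\<bar>" unfolding A0_def using Delta
      by (intro mult_left_mono) auto
    ultimately show ?thesis by simp
  qed
  also have "\<dots> \<le> (\<integral>\<^sup>+y. ennreal (norm (F y * Q y)) \<partial>lborel)"
    by (rule integral_norm_bound_ennreal[OF FQ1])
  also have "\<dots> \<le> (\<integral>\<^sup>+y. ennreal (t / 2) * ennreal (X y) + ennreal (1 / (2 * t)) * ennreal (Y y) \<partial>lborel)"
  proof (rule nn_integral_mono)
    fix y
    have "norm (F y * Q y) \<le> t / 2 * X y + 1 / (2 * t) * Y y"
    proof (cases "y = 0")
      case True
      then have "Q y = 0" unfolding Q_def by simp
      then show ?thesis using X0[of y] Y0[of y] t by simp
    next
      case False
      define w where "w = \<bar>y\<bar>\<^sup>2 * exp (- y\<^sup>2 / l\<^sup>2)"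
      have w: "w > 0" unfolding w_def using False by simp
      define a where "a = cmod (F y)"
      define b where "b = cmod (Q y)"
      have "0 \<le> (t * w * a - b)\<^sup>2" by simp
      then have "2 * t * w * (a * b) \<le> t\<^sup>2 * w\<^sup>2 * a\<^sup>2 + b\<^sup>2" by (simp add: power2_eq_square algebra_simps)
      then have "a * b \<le> (t\<^sup>2 * w\<^sup>2 * a\<^sup>2 + b\<^sup>2) / (2 * t * w)" using t w by (simp add: le_divide_eq mult.commute mult.left_commute)
      also have "(t\<^sup>2 * w\<^sup>2 * a\<^sup>2 + b\<^sup>2) / (2 * t * w) = t / 2 * (a\<^sup>2 * w) + 1 / (2 * t) * (b\<^sup>2 / w)"
        using t w by (simp add: field_simps power2_eq_square)
      finally show ?thesis unfolding X_def Y_def a_def b_def w_def by (simp add: norm_mult mult.assoc)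
    qed
    then show "ennreal (norm (F y * Q y)) \<le> ennreal (t / 2) * ennreal (X y) + ennreal (1 / (2 * t)) * ennreal (Y y)"
      using t X0[of y] Y0[of y] by (simp add: ennreal_mult'[symmetric] ennreal_plus[symmetric] del: ennreal_plus)
  qed
  also have "\<dots> = ennreal (t / 2) * (\<integral>\<^sup>+y. ennreal (X y) \<partial>lborel) + ennreal (1 / (2 * t)) * (\<integral>\<^sup>+y. ennreal (Y y) \<partial>lborel)"
    by (subst nn_integral_add) (auto simp: nn_integral_cmult)
  also have "(\<integral>\<^sup>+y. ennreal (Y y) \<partial>lborel) \<le> ennreal (8 * pi * R)"
  proof -
    have ax: "\<bar>x1 - x2\<bar> \<le> 2 * R" using x1 x2 by auto
    have "(\<integral>\<^sup>+y. ennreal (Y y) \<partial>lborel) \<le> (\<integral>\<^sup>+y. ennreal (8 * R\<^sup>2 / (1 + R\<^sup>2 * y\<^sup>2)) \<partial>lborel)"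
      using Q_bound[OF Rpos ax l] unfolding Y_def Q_def by (intro nn_integral_mono ennreal_leI) simp
    also have "\<dots> \<le> ennreal (8 * pi * R)" by (rule arctan_integral[OF Rpos])
    finally show ?thesis .
  qed
  finally have main: "ennreal A0 \<le> ennreal (t / 2) * (\<integral>\<^sup>+y. ennreal (X y) \<partial>lborel) + ennreal (1 / (2 * t)) * ennreal (8 * pi * R)"
    by (meson add_left_mono mult_left_mono order_trans zero_le)
  have tA: "1 / (2 * t) * (8 * pi * R) = A0 / 2" unfolding t_def using A0 Rpos by (simp add: field_simps)
  have target: "ennreal (\<epsilon>\<^sup>2 / (8 * R)) \<le> (\<integral>\<^sup>+y. ennreal (X y) \<partial>lborel)"
  proof (cases "(\<integral>\<^sup>+y. ennreal (X y) \<partial>lborel)" rule: ennreal_cases)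
    case (real r)
    have eq1: "ennreal (1 / (2 * t)) * ennreal (8 * pi * R) = ennreal (A0 / 2)"
    proof -
      have "ennreal (1 / (2 * t)) * ennreal (8 * pi * R) = ennreal (1 / (2 * t) * (8 * pi * R))"
        by (rule ennreal_mult[symmetric]) (use t Rpos in auto)
      then show ?thesis by (simp only: tA)
    qed
    have eq2: "ennreal (t / 2) * ennreal r + ennreal (A0 / 2) = ennreal (t / 2 * r + A0 / 2)"
      using t A0 real by (simp add: ennreal_mult[symmetric] ennreal_plus)
    have "ennreal A0 \<le> ennreal (t / 2 * r + A0 / 2)"
      using main unfolding real eq1 eq2 .
    then have "A0 \<le> t / 2 * r + A0 / 2" using t A0 real by (subst (asm) ennreal_le_iff) auto
    then have "A0 / 2 \<le> t / 2 * r" by simp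
    then have "A0 \<le> t * r" by simp
    then have "A0 / t \<le> r" using t by (simp add: divide_le_eq mult.commute)
    moreover have "A0 / t = 9 / 64 * \<epsilon>\<^sup>2 / R"
      unfolding t_def A0_def using Rpos by (simp add: field_simps power2_eq_square)
    moreover have "\<epsilon>\<^sup>2 / (8 * R) \<le> 9 / 64 * \<epsilon>\<^sup>2 / R"
      using Rpos by (simp add: field_simps)
    ultimately show ?thesis using real by (simp add: ennreal_leI)
  qed simp
  then show ?thesis unfolding X_def F_def g_def by simp
qed

end
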